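(* There is an absolute constant $C$ such that for every graph $G$ with $m$ edges and no isolated vertices, $g_1(G)\le Cm$.
   Context: $F_{N,1}$ is the set of functions $f:E(K_N)\to E(K_N)$ with $|f(e)\cap e|\le 1$ for every $e\in E(K_N)$. For a graph $G$, $g_1(G)$ is the minimum $N$ such that for every $f\in F_{N,1}$ there is a copy $G^*$ of $G$ in $K_N$ with $f(e)\notin E(G^* )$ for every $e\in E(G^* )$. *)

theory Defs
  imports Main Complex_Main
begin

definition is_graph :: "nat set \<Rightarrow> nat set set \<Rightarrow> bool" where
  "is_graph V E \<longleftrightarrow> finite V \<and> (\<forall>e\<in>E. e \<subseteq> V \<and> card e = 2)"

definition no_isolated :: "nat set \<Rightarrow> nat set set \<Rightarrow> bool" where
  "no_isolated V E \<longleftrightarrow> (\<forall>v\<in>V. \<exists>e\<in>E. v \<in> e)"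

definition KN_edges :: "nat \<Rightarrow> nat set set" where
  "KN_edges N = {e. e \<subseteq> {..<N} \<and> card e = 2}"

text \<open>F_{N,1}: functions E(K_N) -> E(K_N) with |f(e) \<inter> e| \<le> 1 (only values on E(K_N) matter).\<close>
definition F_N1 :: "nat \<Rightarrow> (nat set \<Rightarrow> nat set) set" where
  "F_N1 N = {f. \<forall>e\<in>KN_edges N. f e \<in> KN_edges N \<and> card (f e \<inter> e) \<le> 1}"

text \<open>N is good for G: every f in F_{N,1} admits a copy G* of G in K_N (given by an injective
  vertex map phi into {0..N-1}) with f(e) not in E(G*) for all e in E(G*).\<close>
definition g1_good :: "nat set \<Rightarrow> nat set set \<Rightarrow> nat \<Rightarrow> bool" where
  "g1_good V E N \<longleftrightarrow>
     (\<forall>f\<in>F_N1 N. \<exists>\<phi>::nat \<Rightarrow> nat. inj_on \<phi> V \<and> \<phi> ` V \<subseteq> {..<N} \<and>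
        (\<forall>e\<in>(image \<phi>) ` E. f e \<notin> (image \<phi>) ` E))"

definition g1 :: "nat set \<Rightarrow> nat set set \<Rightarrow> nat" where
  "g1 V E = (LEAST N. g1_good V E N)"

end

theory Submission
  imports Defs
begin

definition gT :: "nat \<Rightarrow> (nat set \<Rightarrow> nat set) \<Rightarrow> nat \<Rightarrow> nat \<Rightarrow> nat set" where
  "gT N f a b = {y \<in> {..<N}. y \<noteq> a \<and> f {y, a} = {y, b}}"
definition gtau :: "nat \<Rightarrow> (nat set \<Rightarrow> nat set) \<Rightarrow> nat \<Rightarrow> nat \<Rightarrow> nat" where
  "gtau N f a b = card (gT N f a b)"
definition gpop :: "nat \<Rightarrow> (nat set \<Rightarrow> nat set) \<Rightarrow> nat set \<Rightarrow> nat" where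
  "gpop N f e = card {p \<in> KN_edges N. f p = e}"
definition gsig :: "nat \<Rightarrow> (nat set \<Rightarrow> nat set) \<Rightarrow> nat \<Rightarrow> nat" where
  "gsig N f a = card {p \<in> KN_edges N. a \<in> f p}"

lemma KN_fin: "finite (KN_edges N)"
proof -
  have "KN_edges N \<subseteq> Pow {..<N}" by (auto simp: KN_edges_def)
  then show ?thesis by (rule finite_subset) simp
qed

lemma KN_card: "card (KN_edges N) \<le> N * N"
proof -
  have "KN_edges N \<subseteq> (\<lambda>(a,b). {a,b}) ` ({..<N} \<times> {..<N})"
  proof
    fix e assume "e \<in> KN_edges N"
    then have "e \<subseteq> {..<N}" "card e = 2" by (auto simp: KN_edges_def)
    then obtain a b where "e = {a,b}" by (auto simp: card_2_iff)
    with \<open>e \<subseteq> {..<N}\<close> show "e \<in> (\<lambda>(a,b). {a,b}) ` ({..<N} \<times> {..<N})" by auto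
  qed
  then have "card (KN_edges N) \<le> card ((\<lambda>(a,b). {a,b}) ` ({..<N} \<times> {..<N}))"
    by (rule card_mono[rotated]) simp
  also have "\<dots> \<le> card ({..<N} \<times> {..<N})" by (rule card_image_le) simp
  finally show ?thesis by (simp add: card_cartesian_product)
qed

lemma KN_in: "a < N \<Longrightarrow> b < N \<Longrightarrow> a \<noteq> b \<Longrightarrow> {a,b} \<in> KN_edges N"
  by (auto simp: KN_edges_def)

lemma KN_card2: "p \<in> KN_edges N \<Longrightarrow> card p = 2"
  by (auto simp: KN_edges_def)

lemma KN_sub: "p \<in> KN_edges N \<Longrightarrow> p \<subseteq> {..<N}"
  by (auto simp: KN_edges_def)

lemma markov:
  fixes g :: "'a \<Rightarrow> nat"
  assumes "finite X" "(\<Sum>x\<in>X. g x) \<le> B"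
  shows "card {x\<in>X. t < g x} * t \<le> B"
proof -
  have "card {x\<in>X. t < g x} * t = (\<Sum>x\<in>{x\<in>X. t < g x}. t)" by simp
  also have "\<dots> \<le> (\<Sum>x\<in>{x\<in>X. t < g x}. g x)" by (rule sum_mono) simp
  also have "\<dots> \<le> (\<Sum>x\<in>X. g x)" by (rule sum_mono2) (use assms in auto)
  finally show ?thesis using assms by simp
qed

context
  fixes N :: nat and f :: "nat set \<Rightarrow> nat set"
  assumes fN: "f \<in> F_N1 N"
begin

lemma fP: "p \<in> KN_edges N \<Longrightarrow> f p \<in> KN_edges N"
  using fN by (auto simp: F_N1_def)

lemma fne: "p \<in> KN_edges N \<Longrightarrow> f p \<noteq> p"
proof
  assume p: "p \<in> KN_edges N" and e: "f p = p"
  have "card (f p \<inter> p) \<le> 1" using fN p by (auto simp: F_N1_def)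
  with e KN_card2[OF p] show False by simp
qed

lemma sig_sum: "(\<Sum>x<N. gsig N f x) \<le> 2 * (N * N)"
proof -
  have "(\<Sum>x<N. gsig N f x) = card (SIGMA x:{..<N}. {p \<in> KN_edges N. x \<in> f p})"
    by (simp add: gsig_def KN_fin)
  also have "\<dots> \<le> card (SIGMA p:KN_edges N. f p)"
  proof (rule card_inj_on_le[where f="\<lambda>(x,p). (p,x)"])
    show "inj_on (\<lambda>(x,p). (p,x)) (SIGMA x:{..<N}. {p \<in> KN_edges N. x \<in> f p})"
      by (auto simp: inj_on_def)
    show "(\<lambda>(x,p). (p,x)) ` (SIGMA x:{..<N}. {p \<in> KN_edges N. x \<in> f p}) \<subseteq> (SIGMA p:KN_edges N. f p)"
      by auto
    show "finite (SIGMA p:KN_edges N. f p)"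
      using KN_fin fP by (auto intro!: finite_SigmaI simp: KN_edges_def intro: finite_subset)
  qed
  also have "\<dots> = (\<Sum>p\<in>KN_edges N. card (f p))"
    using KN_fin fP by (subst card_SigmaI) (auto simp: KN_edges_def intro: finite_subset)
  also have "\<dots> = (\<Sum>p\<in>KN_edges N. 2)"
    by (rule sum.cong) (auto dest: fP KN_card2)
  also have "\<dots> \<le> 2 * (N * N)" using KN_card[of N] by simp
  finally show ?thesis .
qed

lemma pop_sum: "(\<Sum>x<N. gpop N f {x, a}) \<le> gsig N f a"
proof -
  have "(\<Sum>x<N. gpop N f {x, a}) = card (\<Union>x\<in>{..<N}. {p \<in> KN_edges N. f p = {x, a}})"
    unfolding gpop_def
    by (rule card_UN_disjoint[symmetric]) (auto simp: KN_fin doubleton_eq_iff)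
  also have "\<dots> \<le> gsig N f a" unfolding gsig_def
    by (rule card_mono) (auto simp: KN_fin)
  finally show ?thesis .
qed

lemma tau_sum1: "(\<Sum>x<N. gtau N f a x) \<le> N"
proof -
  have "(\<Sum>x<N. gtau N f a x) = card (\<Union>x\<in>{..<N}. gT N f a x)"
    unfolding gtau_def
    by (rule card_UN_disjoint[symmetric]) (auto simp: gT_def doubleton_eq_iff)
  also have "\<dots> \<le> card {..<N}"
    by (rule card_mono) (auto simp: gT_def)
  finally show ?thesis by simp
qed

lemma tau_sum2: "(\<Sum>x<N. gtau N f x a) \<le> gsig N f a"
proof -
  have "(\<Sum>x<N. gtau N f x a) = card (SIGMA x:{..<N}. gT N f x a)"
    by (simp add: gtau_def gT_def)
  also have "\<dots> \<le> gsig N f a" unfolding gsig_def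
  proof (rule card_inj_on_le[where f="\<lambda>(x,y). {y,x}"])
    show "inj_on (\<lambda>(x,y). {y,x}) (SIGMA x:{..<N}. gT N f x a)"
      by (auto simp: inj_on_def gT_def doubleton_eq_iff) (metis doubleton_eq_iff insert_commute)
    show "(\<lambda>(x,y). {y,x}) ` (SIGMA x:{..<N}. gT N f x a) \<subseteq> {p \<in> KN_edges N. a \<in> f p}"
      by (auto simp: gT_def KN_edges_def)
    show "finite {p \<in> KN_edges N. a \<in> f p}" by (simp add: KN_fin)
  qed
  finally show ?thesis .
qed

end

definition gnb :: "nat set set \<Rightarrow> nat \<Rightarrow> nat set" where
  "gnb E v = {u. {v, u} \<in> E}"
definition gdg :: "nat set set \<Rightarrow> nat \<Rightarrow> nat" where
  "gdg E v = card (gnb E v)"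
definition gEU :: "nat set set \<Rightarrow> nat set \<Rightarrow> nat set set" where
  "gEU E U = {e \<in> E. e \<subseteq> U}"

lemma S_insert:
  fixes t :: "nat \<Rightarrow> nat \<Rightarrow> nat"
  assumes "finite B" "w \<notin> B"
  shows "(\<Sum>u\<in>insert w B. \<Sum>u'\<in>insert w B - {u}. t u u') =
         (\<Sum>u\<in>B. \<Sum>u'\<in>B - {u}. t u u') + (\<Sum>u\<in>B. t u w + t w u)"
proof -
  have "(\<Sum>u\<in>insert w B. \<Sum>u'\<in>insert w B - {u}. t u u') =
        (\<Sum>u'\<in>insert w B - {w}. t w u') + (\<Sum>u\<in>B. \<Sum>u'\<in>insert w B - {u}. t u u')"
    using assms by (simp add: sum.insert)
  also have "(\<Sum>u'\<in>insert w B - {w}. t w u') = (\<Sum>u\<in>B. t w u)"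
    using assms by (metis Diff_insert_absorb)
  also have "(\<Sum>u\<in>B. \<Sum>u'\<in>insert w B - {u}. t u u') = (\<Sum>u\<in>B. t u w + (\<Sum>u'\<in>B - {u}. t u u'))"
  proof (rule sum.cong)
    fix u assume "u \<in> B"
    then have "insert w B - {u} = insert w (B - {u})" "w \<notin> B - {u}" using assms by auto
    then show "(\<Sum>u'\<in>insert w B - {u}. t u u') = t u w + (\<Sum>u'\<in>B - {u}. t u u')"
      using assms by simp
  qed simp
  finally show ?thesis by (simp add: sum.distrib)
qed

context
  fixes V :: "nat set" and E :: "nat set set"
  assumes G: "is_graph V E"
begin

lemma finV: "finite V" using G by (simp add: is_graph_def)

lemma finE: "finite E"
proof -
  have "E \<subseteq> Pow V" using G by (auto simp: is_graph_def)
  then show ?thesis using finV by (meson finite_Pow_iff finite_subset)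
qed

lemma edge: "e \<in> E \<Longrightarrow> card e = 2 \<and> e \<subseteq> V" using G by (simp add: is_graph_def)

lemma nb_sub: "gnb E v \<subseteq> V"
  using G by (auto simp: gnb_def is_graph_def)

lemma nb_fin: "finite (gnb E v)" using nb_sub finV by (rule finite_subset)

lemma nb_ne: "u \<in> gnb E v \<Longrightarrow> u \<noteq> v"
  using edge[of "{v,u}"] by (auto simp: gnb_def)

lemma handshake: "(\<Sum>v\<in>U. gdg E v) \<le> 2 * card E" if "U \<subseteq> V"
proof -
  have finU: "finite U" using that finV by (rule finite_subset)
  have "(\<Sum>v\<in>U. gdg E v) = card (SIGMA v:U. gnb E v)"
    using finU by (simp add: gdg_def nb_fin)
  also have "\<dots> \<le> card (SIGMA e:E. e)"
  proof (rule card_inj_on_le[where f="\<lambda>(v,u). ({v,u}, v)"])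
    show "inj_on (\<lambda>(v,u). ({v,u}, v)) (SIGMA v:U. gnb E v)"
      by (auto simp: inj_on_def doubleton_eq_iff)
    show "(\<lambda>(v,u). ({v,u}, v)) ` (SIGMA v:U. gnb E v) \<subseteq> (SIGMA e:E. e)"
      by (auto simp: gnb_def)
    show "finite (SIGMA e:E. e)" using finE edge
      by (intro finite_SigmaI) (auto intro: card_ge_0_finite)
  qed
  also have "\<dots> = (\<Sum>e\<in>E. card e)" using finE edge
    by (subst card_SigmaI) (auto intro: card_ge_0_finite)
  also have "\<dots> = (\<Sum>e\<in>E. 2)" by (rule sum.cong) (auto dest: edge)
  finally show ?thesis by simp
qed

lemma deg_bound: "card U * d \<le> 2 * card E" if "U \<subseteq> V" "\<forall>u\<in>U. d \<le> gdg E u"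
proof -
  have "card U * d = (\<Sum>u\<in>U. d)" by simp
  also have "\<dots> \<le> (\<Sum>u\<in>U. gdg E u)" using that by (intro sum_mono) auto
  also have "\<dots> \<le> 2 * card E" using handshake that by simp
  finally show ?thesis .
qed

lemma dg_pos: "0 < gdg E v" if ni: "no_isolated V E" and vV: "v \<in> V"
proof -
  obtain e where e: "e \<in> E" "v \<in> e" using ni vV by (auto simp: no_isolated_def)
  then obtain a b where ab: "e = {a,b}" "a \<noteq> b" using edge[OF e(1)] by (auto simp: card_2_iff)
  have "\<exists>u. {v,u} \<in> E"
  proof (cases "v = a")
    case True then show ?thesis using e ab by auto
  next
    case False then have "v = b" using e ab by auto
    then show ?thesis using e ab by (auto simp: insert_commute)
  qed
  then have "gnb E v \<noteq> {}" by (auto simp: gnb_def)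
  then show ?thesis using nb_fin by (simp add: gdg_def card_gt_0_iff)
qed

lemma cardV: "card V \<le> 2 * card E" if "no_isolated V E"
  using deg_bound[of V 1] dg_pos[OF that] by (simp add: Suc_le_eq)

lemma EU_insert:
  assumes "w \<notin> U"
  shows "gEU E (insert w U) = gEU E U \<union> (\<lambda>u. {w,u}) ` (gnb E w \<inter> U)"
proof
  show "gEU E (insert w U) \<subseteq> gEU E U \<union> (\<lambda>u. {w,u}) ` (gnb E w \<inter> U)"
  proof
    fix e assume "e \<in> gEU E (insert w U)"
    then have e: "e \<in> E" "e \<subseteq> insert w U" by (auto simp: gEU_def)
    show "e \<in> gEU E U \<union> (\<lambda>u. {w,u}) ` (gnb E w \<inter> U)"
    proof (cases "e \<subseteq> U")
      case True then show ?thesis using e by (auto simp: gEU_def)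
    next
      case False
      then have we: "w \<in> e" using e by auto
      obtain a b where ab: "e = {a,b}" "a \<noteq> b" using edge[OF e(1)] by (auto simp: card_2_iff)
      obtain u where u: "e = {w,u}" "u \<noteq> w"
        using we ab by (auto simp: insert_commute)
      then have "u \<in> U" using e by auto
      moreover have "u \<in> gnb E w" using u e by (auto simp: gnb_def)
      ultimately show ?thesis using u by auto
    qed
  qed
  show "gEU E U \<union> (\<lambda>u. {w,u}) ` (gnb E w \<inter> U) \<subseteq> gEU E (insert w U)"
    by (auto simp: gEU_def gnb_def)
qed

lemma EU_disj: "w \<notin> U \<Longrightarrow> gEU E U \<inter> (\<lambda>u. {w,u}) ` X = {}"
  by (auto simp: gEU_def)

lemma inj_dbl: "inj_on (\<lambda>u. {w::nat,u}) X"
  by (auto simp: inj_on_def doubleton_eq_iff)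

lemma EU_fin: "finite (gEU E U)" using finE by (simp add: gEU_def)

lemma EU_card_insert:
  assumes "w \<notin> U" "finite U"
  shows "card (gEU E (insert w U)) = card (gEU E U) + card (gnb E w \<inter> U)"
  using assms EU_fin
  by (simp add: EU_insert card_Un_disjoint EU_disj card_image inj_dbl)

lemma EU_le: "card (gEU E U) \<le> card E"
  using finE by (auto simp: gEU_def intro: card_mono)

end

definition gS :: "nat \<Rightarrow> (nat set \<Rightarrow> nat set) \<Rightarrow> nat set set \<Rightarrow> (nat \<Rightarrow> nat) \<Rightarrow> nat set \<Rightarrow> nat \<Rightarrow> nat" where
  "gS N f E \<phi> U v = (\<Sum>u\<in>gnb E v \<inter> U. \<Sum>u'\<in>(gnb E v \<inter> U) - {u}. gtau N f (\<phi> u) (\<phi> u'))"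

definition Inv :: "nat \<Rightarrow> (nat set \<Rightarrow> nat set) \<Rightarrow> nat set \<Rightarrow> nat set set \<Rightarrow> nat set \<Rightarrow> (nat \<Rightarrow> nat) \<Rightarrow> bool" where
  "Inv N f V E U \<phi> \<longleftrightarrow> U \<subseteq> V \<and> inj_on \<phi> U \<and> \<phi> ` U \<subseteq> {..<N} \<and>
     (\<forall>u\<in>U. gsig N f (\<phi> u) \<le> 8 * N) \<and>
     (\<forall>e1\<in>gEU E U. \<forall>e2\<in>gEU E U. f (\<phi> ` e1) \<noteq> \<phi> ` e2) \<and>
     (\<Sum>e\<in>gEU E U. gpop N f (\<phi> ` e)) \<le> 64 * card (gEU E U) \<and>
     (\<forall>v\<in>V-U. gdg E v * gS N f E \<phi> U v \<le> 144 * card E * card (gnb E v \<inter> U)) \<and>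
     (\<forall>u\<in>U. \<forall>v\<in>V-U. gdg E v \<le> gdg E u)"

context
  fixes N :: nat and f :: "nat set \<Rightarrow> nat set" and V :: "nat set" and E :: "nat set set"
  assumes fN: "f \<in> F_N1 N" and G: "is_graph V E"
begin

lemma img_KN:
  assumes "U \<subseteq> V" "inj_on \<phi> U" "\<phi> ` U \<subseteq> {..<N}" "e \<in> gEU E U"
  shows "\<phi> ` e \<in> KN_edges N"
proof -
  have e: "e \<in> E" "e \<subseteq> U" using assms(4) by (auto simp: gEU_def)
  have "card e = 2" using edge[OF G e(1)] by simp
  moreover have "inj_on \<phi> e" using assms(2) e(2) by (rule inj_on_subset)
  ultimately have "card (\<phi> ` e) = 2" by (simp add: card_image)
  moreover have "\<phi> ` e \<subseteq> {..<N}" using assms(3) e(2) by auto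
  ultimately show ?thesis by (simp add: KN_edges_def)
qed

lemma extend:
  assumes inv: "Inv N f V E U \<phi>" and wV: "w \<in> V - U" and wmax: "\<forall>v\<in>V-U. gdg E v \<le> gdg E w"
    and x1: "x < N" and x2: "x \<notin> \<phi> ` U" and x3: "gsig N f x \<le> 8*N"
    and x4: "(\<Sum>u\<in>gnb E w \<inter> U. gpop N f {x, \<phi> u}) \<le> 64 * card (gnb E w \<inter> U)"
    and x5: "(\<Sum>u\<in>U. gtau N f (\<phi> u) x + gtau N f x (\<phi> u)) \<le> 72 * card U"
    and x6: "\<forall>e\<in>gEU E U. x \<notin> f (\<phi> ` e)"
    and x7: "\<forall>u\<in>U. f {x, \<phi> u} \<notin> (\<lambda>e. \<phi> ` e) ` gEU E U"
    and x8: "\<forall>u\<in>gnb E w \<inter> U. \<forall>u'\<in>gnb E w \<inter> U. u \<noteq> u' \<longrightarrow> f {x, \<phi> u} \<noteq> {x, \<phi> u'}"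
  shows "Inv N f V E (insert w U) (\<phi>(w:=x))"
proof -
  define \<psi> where "\<psi> = \<phi>(w:=x)"
  define B where "B = gnb E w \<inter> U"
  have UV: "U \<subseteq> V" and inj: "inj_on \<phi> U" and img: "\<phi> ` U \<subseteq> {..<N}"
    and sg: "\<forall>u\<in>U. gsig N f (\<phi> u) \<le> 8 * N"
    and cf: "\<forall>e1\<in>gEU E U. \<forall>e2\<in>gEU E U. f (\<phi> ` e1) \<noteq> \<phi> ` e2"
    and ps: "(\<Sum>e\<in>gEU E U. gpop N f (\<phi> ` e)) \<le> 64 * card (gEU E U)"
    and sv: "\<forall>v\<in>V-U. gdg E v * gS N f E \<phi> U v \<le> 144 * card E * card (gnb E v \<inter> U)"
    and ord: "\<forall>u\<in>U. \<forall>v\<in>V-U. gdg E v \<le> gdg E u"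
    using inv by (auto simp: Inv_def)
  have wU: "w \<notin> U" and wV': "w \<in> V" using wV by auto
  have finU: "finite U" using UV finV[OF G] by (rule finite_subset)
  have agree: "\<And>u. u \<in> U \<Longrightarrow> \<psi> u = \<phi> u" using wU by (auto simp: \<psi>_def)
  have img_old: "\<psi> ` e = \<phi> ` e" if "e \<in> gEU E U" for e
  proof (rule image_cong)
    show "\<And>y. y \<in> e \<Longrightarrow> \<psi> y = \<phi> y" using that agree by (auto simp: gEU_def)
  qed simp
  have img_new: "\<And>u. u \<in> U \<Longrightarrow> \<psi> ` {w,u} = {x, \<phi> u}"
    using agree wU by (auto simp: \<psi>_def)
  have xne: "\<And>u. u \<in> U \<Longrightarrow> x \<noteq> \<phi> u" using x2 by auto
  have newKN: "\<And>u. u \<in> U \<Longrightarrow> {x, \<phi> u} \<in> KN_edges N"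
    using x1 img xne by (intro KN_in) auto
  have degw: "card (insert w U) * gdg E w \<le> 2 * card E"
    using ord wV UV by (intro deg_bound[OF G]) auto
  then have degw': "card U * gdg E w \<le> 2 * card E" using finU wU by simp
  have EUi: "gEU E (insert w U) = gEU E U \<union> (\<lambda>u. {w,u}) ` B"
    unfolding B_def by (rule EU_insert[OF G wU])
  have c1: "insert w U \<subseteq> V" using UV wV' by auto
  have c2: "inj_on \<psi> (insert w U)"
  proof -
    have "inj_on \<psi> U" using inj agree inj_on_cong by blast
    moreover have "\<psi> w \<notin> \<psi> ` U" using x2 agree by (auto simp: \<psi>_def)
    ultimately show ?thesis using wU by simp
  qed
  have c3: "\<psi> ` insert w U \<subseteq> {..<N}" using img x1 agree by (auto simp: \<psi>_def)
  have c4: "\<forall>u\<in>insert w U. gsig N f (\<psi> u) \<le> 8 * N" using sg x3 agree by (auto simp: \<psi>_def)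
  have c5: "\<forall>e1\<in>gEU E (insert w U). \<forall>e2\<in>gEU E (insert w U). f (\<psi> ` e1) \<noteq> \<psi> ` e2"
  proof (intro ballI)
    fix e1 e2 assume e1: "e1 \<in> gEU E (insert w U)" and e2: "e2 \<in> gEU E (insert w U)"
    show "f (\<psi> ` e1) \<noteq> \<psi> ` e2"
    proof (cases "e1 \<in> gEU E U")
      case T1: True
      show ?thesis
      proof (cases "e2 \<in> gEU E U")
        case True then show ?thesis using T1 cf img_old by auto
      next
        case False
        then obtain u where u: "u \<in> B" "e2 = {w,u}" using e2 EUi by auto
        then have uU: "u \<in> U" by (auto simp: B_def)
        show ?thesis
        proof
          assume "f (\<psi> ` e1) = \<psi> ` e2"
          then have "f (\<phi> ` e1) = {x, \<phi> u}" using img_old[OF T1] img_new[OF uU] u by simp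
          then have "x \<in> f (\<phi> ` e1)" by simp
          then show False using x6 T1 by auto
        qed
      qed
    next
      case F1: False
      then obtain u where u: "u \<in> B" "e1 = {w,u}" using e1 EUi by auto
      then have uU: "u \<in> U" by (auto simp: B_def)
      have pe1: "\<psi> ` e1 = {x, \<phi> u}" using img_new[OF uU] u by simp
      show ?thesis
      proof (cases "e2 \<in> gEU E U")
        case True
        show ?thesis
        proof
          assume "f (\<psi> ` e1) = \<psi> ` e2"
          then have "f {x, \<phi> u} = \<phi> ` e2" using pe1 img_old[OF True] by simp
          then show False using x7 uU True by auto
        qed
      next
        case False
        then obtain u' where u': "u' \<in> B" "e2 = {w,u'}" using e2 EUi by auto
        then have u'U: "u' \<in> U" by (auto simp: B_def)
        have pe2: "\<psi> ` e2 = {x, \<phi> u'}" using img_new[OF u'U] u' by simp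
        show ?thesis
        proof (cases "u = u'")
          case True
          then show ?thesis using pe1 pe2 fne[OF fN newKN[OF uU]] by simp
        next
          case False
          then show ?thesis using pe1 pe2 x8 u(1) u'(1) by (auto simp: B_def)
        qed
      qed
    qed
  qed
  have c6: "(\<Sum>e\<in>gEU E (insert w U). gpop N f (\<psi> ` e)) \<le> 64 * card (gEU E (insert w U))"
  proof -
    have finB: "finite B" using finU by (simp add: B_def)
    have "(\<Sum>e\<in>gEU E (insert w U). gpop N f (\<psi> ` e)) =
          (\<Sum>e\<in>gEU E U. gpop N f (\<psi> ` e)) + (\<Sum>e\<in>(\<lambda>u. {w,u}) ` B. gpop N f (\<psi> ` e))"
      unfolding EUi using EU_fin[OF G] finB EU_disj[OF G wU]
      by (intro sum.union_disjoint) auto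
    also have "(\<Sum>e\<in>gEU E U. gpop N f (\<psi> ` e)) = (\<Sum>e\<in>gEU E U. gpop N f (\<phi> ` e))"
      using img_old by (intro sum.cong) auto
    also have "(\<Sum>e\<in>(\<lambda>u. {w,u}) ` B. gpop N f (\<psi> ` e)) = (\<Sum>u\<in>B. gpop N f (\<psi> ` {w,u}))"
      by (subst sum.reindex[OF inj_dbl[OF G]]) simp
    also have "\<dots> = (\<Sum>u\<in>B. gpop N f {x, \<phi> u})"
      using img_new by (intro sum.cong) (auto simp: B_def)
    finally have "(\<Sum>e\<in>gEU E (insert w U). gpop N f (\<psi> ` e)) \<le> 64 * card (gEU E U) + 64 * card B"
      using ps x4 unfolding B_def by linarith
    also have "\<dots> = 64 * card (gEU E (insert w U))"
      using EU_card_insert[OF G wU finU] by (simp add: B_def)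
    finally show ?thesis .
  qed
  have c7: "\<forall>v\<in>V - insert w U. gdg E v * gS N f E \<psi> (insert w U) v \<le> 144 * card E * card (gnb E v \<inter> insert w U)"
  proof
    fix v assume v: "v \<in> V - insert w U"
    then have vU: "v \<in> V - U" and vw: "v \<noteq> w" by auto
    define Bv where "Bv = gnb E v \<inter> U"
    have finBv: "finite Bv" using finU by (simp add: Bv_def)
    have svv: "gdg E v * gS N f E \<phi> U v \<le> 144 * card E * card Bv" using sv vU by (simp add: Bv_def)
    have dvw: "gdg E v \<le> gdg E w" using wmax vU by simp
    show "gdg E v * gS N f E \<psi> (insert w U) v \<le> 144 * card E * card (gnb E v \<inter> insert w U)"
    proof (cases "w \<in> gnb E v")
      case False
      then have eqB: "gnb E v \<inter> insert w U = Bv" by (auto simp: Bv_def)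
      have "gS N f E \<psi> (insert w U) v = gS N f E \<phi> U v"
        unfolding gS_def eqB using agree by (intro sum.cong) (auto simp: Bv_def)
      then show ?thesis using svv eqB by simp
    next
      case True
      then have eqB: "gnb E v \<inter> insert w U = insert w Bv" by (auto simp: Bv_def)
      have wBv: "w \<notin> Bv" using wU by (simp add: Bv_def)
      have "gS N f E \<psi> (insert w U) v =
            (\<Sum>u\<in>Bv. \<Sum>u'\<in>Bv - {u}. gtau N f (\<psi> u) (\<psi> u')) + (\<Sum>u\<in>Bv. gtau N f (\<psi> u) (\<psi> w) + gtau N f (\<psi> w) (\<psi> u))"
        unfolding gS_def eqB by (rule S_insert[OF finBv wBv])
      also have "(\<Sum>u\<in>Bv. \<Sum>u'\<in>Bv - {u}. gtau N f (\<psi> u) (\<psi> u')) = gS N f E \<phi> U v"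
        unfolding gS_def Bv_def using agree by (intro sum.cong) auto
      also have "(\<Sum>u\<in>Bv. gtau N f (\<psi> u) (\<psi> w) + gtau N f (\<psi> w) (\<psi> u)) = (\<Sum>u\<in>Bv. gtau N f (\<phi> u) x + gtau N f x (\<phi> u))"
        using agree by (intro sum.cong) (auto simp: Bv_def \<psi>_def)
      also have "\<dots> \<le> (\<Sum>u\<in>U. gtau N f (\<phi> u) x + gtau N f x (\<phi> u))"
        using finU by (intro sum_mono2) (auto simp: Bv_def)
      finally have le: "gS N f E \<psi> (insert w U) v \<le> gS N f E \<phi> U v + 72 * card U" using x5 by linarith
      have "gdg E v * gS N f E \<psi> (insert w U) v \<le> gdg E v * gS N f E \<phi> U v + gdg E v * (72 * card U)"
        using le by (metis add_mult_distrib2 mult_le_mono2)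
      also have "gdg E v * (72 * card U) \<le> 144 * card E"
      proof -
        have "gdg E v * card U \<le> gdg E w * card U" using dvw by simp
        also have "\<dots> \<le> 2 * card E" using degw' by (simp add: mult.commute)
        finally have h: "gdg E v * card U \<le> 2 * card E" .
        have "gdg E v * (72 * card U) = 72 * (gdg E v * card U)" by simp
        then show ?thesis using h by linarith
      qed
      finally have "gdg E v * gS N f E \<psi> (insert w U) v \<le> 144 * card E * card Bv + 144 * card E"
        using svv by linarith
      also have "\<dots> = 144 * card E * card (insert w Bv)" using finBv wBv by simp
      finally show ?thesis using eqB by simp
    qed
  qed
  have c8: "\<forall>u\<in>insert w U. \<forall>v\<in>V - insert w U. gdg E v \<le> gdg E u"
    using ord wmax by auto
  show ?thesis unfolding \<psi>_def[symmetric] Inv_def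
    using c1 c2 c3 c4 c5 c6 c7 c8 by blast
qed

end

lemma scale2: "c * (8 * N) \<le> 2 * (N * N) \<Longrightarrow> 0 < N \<Longrightarrow> 4 * c \<le> (N::nat)"
proof -
  assume a: "c * (8 * N) \<le> 2 * (N * N)" "0 < N"
  have "c * (8 * N) = (4 * c) * (2 * N)" by (simp only: mult.commute mult.left_commute mult.assoc)
  moreover have "2 * (N * N) = N * (2 * N)" by (simp only: mult.commute mult.left_commute)
  ultimately have "(4 * c) * (2 * N) \<le> N * (2 * N)" using a(1) by simp
  moreover have "0 < 2 * N" using a(2) by simp
  ultimately show ?thesis by (metis mult_le_cancel2)
qed

lemma scale3: "c * (64 * k) \<le> k * (8 * N) \<Longrightarrow> 0 < k \<Longrightarrow> 8 * c \<le> (N::nat)"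
proof -
  assume a: "c * (64 * k) \<le> k * (8 * N)" "0 < k"
  have "c * (64 * k) = (8 * c) * (8 * k)" by (simp only: mult.commute mult.left_commute mult.assoc)
  moreover have "k * (8 * N) = N * (8 * k)" by (simp only: mult.commute mult.left_commute mult.assoc)
  ultimately have "(8 * c) * (8 * k) \<le> N * (8 * k)" using a(1) by simp
  moreover have "0 < 8 * k" using a(2) by simp
  ultimately show ?thesis by (metis mult_le_cancel2)
qed

lemma scale4: "c * (72 * s) \<le> s * (9 * N) \<Longrightarrow> 0 < s \<Longrightarrow> 8 * c \<le> (N::nat)"
proof -
  assume a: "c * (72 * s) \<le> s * (9 * N)" "0 < s"
  have "c * (72 * s) = (8 * c) * (9 * s)" by (simp only: mult.commute mult.left_commute mult.assoc)
  moreover have "s * (9 * N) = N * (9 * s)" by (simp only: mult.commute mult.left_commute mult.assoc)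
  ultimately have "(8 * c) * (9 * s) \<le> N * (9 * s)" using a(1) by simp
  moreover have "0 < 9 * s" using a(2) by simp
  ultimately show ?thesis by (metis mult_le_cancel2)
qed

lemma scale7: "S * d \<le> M * (d::nat) \<Longrightarrow> 0 < d \<Longrightarrow> S \<le> M"
  by (metis mult_le_cancel2)


context
  fixes N :: nat and f :: "nat set \<Rightarrow> nat set" and V :: "nat set" and E :: "nat set set"
  assumes fN: "f \<in> F_N1 N" and G: "is_graph V E" and ni: "no_isolated V E"
    and NN: "N = 600 * card E"
begin

lemma step:
  assumes inv: "Inv N f V E U \<phi>" and UV: "U \<noteq> V"
  shows "\<exists>w \<psi>. w \<in> V - U \<and> Inv N f V E (insert w U) \<psi>"
proof -
  have UsV: "U \<subseteq> V" and inj: "inj_on \<phi> U" and img: "\<phi> ` U \<subseteq> {..<N}"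
    and sg: "\<forall>u\<in>U. gsig N f (\<phi> u) \<le> 8 * N"
    and ps: "(\<Sum>e\<in>gEU E U. gpop N f (\<phi> ` e)) \<le> 64 * card (gEU E U)"
    and sv: "\<forall>v\<in>V-U. gdg E v * gS N f E \<phi> U v \<le> 144 * card E * card (gnb E v \<inter> U)"
    using inv by (auto simp: Inv_def)
  have finV: "finite V" using finV[OF G] .
  have finU: "finite U" using UsV finV by (rule finite_subset)
  have ne: "V - U \<noteq> {}" using UsV UV by auto
  define D where "D = gdg E ` (V - U)"
  have "Max D \<in> D" unfolding D_def using ne finV by (intro Max_in) auto
  then obtain w where wV: "w \<in> V - U" and wD: "gdg E w = Max D" by (auto simp: D_def)
  have wmax: "\<forall>v\<in>V-U. gdg E v \<le> gdg E w"
    using finV wD by (auto simp: D_def)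
  define m where "m = card E"
  have dgw: "0 < gdg E w" using dg_pos[OF G ni] wV by auto
  have mpos: "0 < m"
  proof -
    have "gnb E w \<noteq> {}" using dgw by (auto simp: gdg_def)
    then have "E \<noteq> {}" by (auto simp: gnb_def)
    then show ?thesis using finE[OF G] by (simp add: m_def card_gt_0_iff)
  qed
  have Npos: "0 < N" using mpos NN m_def by simp
  define X where "X = {..<N}"
  define B where "B = gnb E w \<inter> U"
  define k where "k = card B"
  define s where "s = card U"
  have finB: "finite B" using finU by (simp add: B_def)
  have BU: "B \<subseteq> U" by (auto simp: B_def)
  define popF where "popF x = (\<Sum>u\<in>B. gpop N f {x, \<phi> u})" for x
  define tauF where "tauF x = (\<Sum>u\<in>U. gtau N f (\<phi> u) x + gtau N f x (\<phi> u))" for x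
  define B1 where "B1 = \<phi> ` U"
  define B2 where "B2 = {x\<in>X. 8 * N < gsig N f x}"
  define B3 where "B3 = {x\<in>X. 64 * k < popF x}"
  define B4 where "B4 = {x\<in>X. 72 * s < tauF x}"
  define B5 where "B5 = (\<Union>e\<in>gEU E U. f (\<phi> ` e))"
  define Q where "Q = {p \<in> KN_edges N. f p \<in> (\<lambda>e. \<phi> ` e) ` gEU E U}"
  define B6 where "B6 = \<Union>Q"
  define B7 where "B7 = (\<Union>u\<in>B. \<Union>u'\<in>B - {u}. gT N f (\<phi> u) (\<phi> u'))"
  have c1: "card B1 \<le> 2 * m"
  proof -
    have "card B1 \<le> card U" unfolding B1_def by (rule card_image_le[OF finU])
    also have "\<dots> \<le> card V" by (rule card_mono[OF finV UsV])
    also have "\<dots> \<le> 2 * m" using cardV[OF G ni] by (simp add: m_def)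
    finally show ?thesis .
  qed
  have c2: "4 * card B2 \<le> N"
  proof -
    have "card B2 * (8 * N) \<le> 2 * (N * N)"
      unfolding B2_def X_def by (rule markov[OF finite_lessThan sig_sum[OF fN]])
    then show ?thesis using Npos by (rule scale2)
  qed
  have c3: "8 * card B3 \<le> N"
  proof (cases "k = 0")
    case True
    then have "B = {}" using finB by (simp add: k_def)
    then have "B3 = {}" by (simp add: B3_def popF_def)
    then show ?thesis by simp
  next
    case False
    have "(\<Sum>x\<in>X. popF x) = (\<Sum>u\<in>B. \<Sum>x<N. gpop N f {x, \<phi> u})"
      unfolding popF_def X_def by (rule sum.swap)
    also have "\<dots> \<le> (\<Sum>u\<in>B. gsig N f (\<phi> u))"
      by (intro sum_mono pop_sum[OF fN])
    also have "\<dots> \<le> (\<Sum>u\<in>B. 8 * N)" using sg BU by (intro sum_mono) auto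
    also have "\<dots> = k * (8 * N)" by (simp add: k_def)
    finally have sB3: "(\<Sum>x\<in>X. popF x) \<le> k * (8 * N)" .
    have "card B3 * (64 * k) \<le> k * (8 * N)"
      unfolding B3_def by (rule markov[OF _ sB3]) (simp add: X_def)
    then show ?thesis using False by (intro scale3) auto
  qed
  have c4: "8 * card B4 \<le> N"
  proof (cases "s = 0")
    case True
    then have "U = {}" using finU by (simp add: s_def)
    then have "B4 = {}" by (simp add: B4_def tauF_def)
    then show ?thesis by simp
  next
    case False
    have "(\<Sum>x\<in>X. tauF x) = (\<Sum>u\<in>U. \<Sum>x<N. gtau N f (\<phi> u) x + gtau N f x (\<phi> u))"
      unfolding tauF_def X_def by (rule sum.swap)
    also have "\<dots> = (\<Sum>u\<in>U. (\<Sum>x<N. gtau N f (\<phi> u) x) + (\<Sum>x<N. gtau N f x (\<phi> u)))"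
      by (simp add: sum.distrib)
    also have "\<dots> \<le> (\<Sum>u\<in>U. 9 * N)"
    proof (rule sum_mono)
      fix u assume uU: "u \<in> U"
      have "(\<Sum>x<N. gtau N f (\<phi> u) x) \<le> N" by (rule tau_sum1[OF fN])
      moreover have "(\<Sum>x<N. gtau N f x (\<phi> u)) \<le> 8 * N"
        using tau_sum2[OF fN, of "\<phi> u"] sg uU by fastforce
      ultimately show "(\<Sum>x<N. gtau N f (\<phi> u) x) + (\<Sum>x<N. gtau N f x (\<phi> u)) \<le> 9 * N"
        by linarith
    qed
    also have "\<dots> = s * (9 * N)" by (simp add: s_def)
    finally have sB4: "(\<Sum>x\<in>X. tauF x) \<le> s * (9 * N)" .
    have "card B4 * (72 * s) \<le> s * (9 * N)"
      unfolding B4_def by (rule markov[OF _ sB4]) (simp add: X_def)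
    then show ?thesis using False by (intro scale4) auto
  qed
  have EKN: "\<And>e. e \<in> gEU E U \<Longrightarrow> \<phi> ` e \<in> KN_edges N"
    using img_KN[OF fN G UsV inj img] by blast
  have c5: "card B5 \<le> 2 * m"
  proof -
    have "card B5 \<le> (\<Sum>e\<in>gEU E U. card (f (\<phi> ` e)))"
      unfolding B5_def by (rule card_UN_le[OF EU_fin[OF G]])
    also have "\<dots> = (\<Sum>e\<in>gEU E U. 2)"
      by (rule sum.cong) (auto intro: KN_card2 fP[OF fN] EKN)
    also have "\<dots> \<le> 2 * m" using EU_le[OF G, of U] by (simp add: m_def)
    finally show ?thesis .
  qed
  have c6: "card B6 \<le> 128 * m"
  proof -
    have "card Q \<le> card (\<Union>e\<in>gEU E U. {p \<in> KN_edges N. f p = \<phi> ` e})"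
      by (rule card_mono) (auto simp: Q_def KN_fin intro: finite_UN_I EU_fin[OF G])
    also have "\<dots> \<le> (\<Sum>e\<in>gEU E U. gpop N f (\<phi> ` e))"
      unfolding gpop_def by (rule card_UN_le[OF EU_fin[OF G]])
    also have "\<dots> \<le> 64 * m" using ps EU_le[OF G, of U] by (simp add: m_def)
    finally have cQ: "card Q \<le> 64 * m" .
    have "card B6 \<le> sum card Q" unfolding B6_def by (rule card_Union_le_sum_card)
    also have "\<dots> = (\<Sum>p\<in>Q. 2)" by (rule sum.cong) (auto simp: Q_def KN_card2)
    also have "\<dots> = 2 * card Q" by simp
    finally show ?thesis using cQ by linarith
  qed
  have c7: "card B7 \<le> 144 * m"
  proof -
    have "card B7 \<le> (\<Sum>u\<in>B. card (\<Union>u'\<in>B - {u}. gT N f (\<phi> u) (\<phi> u')))"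
      unfolding B7_def by (rule card_UN_le[OF finB])
    also have "\<dots> \<le> (\<Sum>u\<in>B. \<Sum>u'\<in>B - {u}. gtau N f (\<phi> u) (\<phi> u'))"
      unfolding gtau_def using finB by (intro sum_mono card_UN_le) auto
    also have "\<dots> = gS N f E \<phi> U w" by (simp add: gS_def B_def)
    also have "\<dots> \<le> 144 * m"
    proof -
      have h: "gdg E w * gS N f E \<phi> U w \<le> 144 * m * card B"
        using sv wV by (simp add: B_def m_def)
      have "card B \<le> gdg E w" unfolding B_def gdg_def
        by (rule card_mono[OF nb_fin[OF G]]) auto
      then have "144 * m * card B \<le> 144 * m * gdg E w" by simp
      with h have "gdg E w * gS N f E \<phi> U w \<le> 144 * m * gdg E w" by (rule order_trans)
      then have "gS N f E \<phi> U w * gdg E w \<le> 144 * m * gdg E w" by (simp only: mult.commute)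
      then show ?thesis using dgw by (rule scale7)
    qed
    finally show ?thesis .
  qed
  define BB where "BB = B1 \<union> B2 \<union> B3 \<union> B4 \<union> B5 \<union> B6 \<union> B7"
  have u1: "card (B1 \<union> B2) \<le> card B1 + card B2" by (rule card_Un_le)
  have u2: "card (B1 \<union> B2 \<union> B3) \<le> card (B1 \<union> B2) + card B3" by (rule card_Un_le)
  have u3: "card (B1 \<union> B2 \<union> B3 \<union> B4) \<le> card (B1 \<union> B2 \<union> B3) + card B4" by (rule card_Un_le)
  have u4: "card (B1 \<union> B2 \<union> B3 \<union> B4 \<union> B5) \<le> card (B1 \<union> B2 \<union> B3 \<union> B4) + card B5" by (rule card_Un_le)
  have u5: "card (B1 \<union> B2 \<union> B3 \<union> B4 \<union> B5 \<union> B6) \<le> card (B1 \<union> B2 \<union> B3 \<union> B4 \<union> B5) + card B6" by (rule card_Un_le)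
  have u6: "card BB \<le> card (B1 \<union> B2 \<union> B3 \<union> B4 \<union> B5 \<union> B6) + card B7" unfolding BB_def by (rule card_Un_le)
  have "card BB \<le> card B1 + card B2 + card B3 + card B4 + card B5 + card B6 + card B7"
    using u1 u2 u3 u4 u5 u6 by linarith
  also have "\<dots> < N"
  proof -
    have "N = 600 * m" using NN by (simp add: m_def)
    then show ?thesis using c1 c2 c3 c4 c5 c6 c7 mpos by linarith
  qed
  finally have "card BB < card X" by (simp add: X_def)
  moreover have finBB: "finite BB"
  proof -
    have "finite B1" using finU by (simp add: B1_def)
    moreover have "finite B2" unfolding B2_def X_def by (rule finite_subset[of _ "{..<N}"]) auto
    moreover have "finite B3" unfolding B3_def X_def by (rule finite_subset[of _ "{..<N}"]) auto
    moreover have "finite B4" unfolding B4_def X_def by (rule finite_subset[of _ "{..<N}"]) auto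
    moreover have "finite B5"
    proof -
      have "\<forall>e\<in>gEU E U. finite (f (\<phi> ` e))"
      proof
        fix e assume "e \<in> gEU E U"
        then have "card (f (\<phi> ` e)) = 2" using KN_card2 fP[OF fN] EKN by blast
        then show "finite (f (\<phi> ` e))" by (intro card_ge_0_finite) simp
      qed
      then show ?thesis unfolding B5_def using EU_fin[OF G] by blast
    qed
    moreover have "finite B6"
    proof -
      have "finite Q" unfolding Q_def using KN_fin[of N] by (rule finite_subset[rotated]) auto
      moreover have "\<forall>p\<in>Q. finite p"
      proof
        fix p assume "p \<in> Q"
        then have "card p = 2" by (auto simp: Q_def intro: KN_card2)
        then show "finite p" by (intro card_ge_0_finite) simp
      qed
      ultimately show ?thesis unfolding B6_def by blast
    qed
    moreover have "finite B7"
    proof (rule finite_subset[of _ "{..<N}"])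
      show "B7 \<subseteq> {..<N}" unfolding B7_def gT_def by blast
    qed simp
    ultimately show ?thesis by (simp add: BB_def)
  qed
  moreover have "card X - card BB \<le> card (X - BB)"
    by (rule diff_card_le_card_Diff[OF finBB])
  ultimately have "0 < card (X - BB)" by linarith
  then have "X - BB \<noteq> {}" by (intro notI) simp
  then obtain x where xX: "x \<in> X" and xB: "x \<notin> BB" by blast
  have x1: "x < N" using xX by (simp add: X_def)
  have x2: "x \<notin> \<phi> ` U" using xB by (simp add: BB_def B1_def)
  have x3: "gsig N f x \<le> 8 * N" using xB xX by (auto simp: BB_def B2_def)
  have x4: "(\<Sum>u\<in>gnb E w \<inter> U. gpop N f {x, \<phi> u}) \<le> 64 * card (gnb E w \<inter> U)"
    using xB xX by (auto simp: BB_def B3_def popF_def k_def B_def)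
  have x5: "(\<Sum>u\<in>U. gtau N f (\<phi> u) x + gtau N f x (\<phi> u)) \<le> 72 * card U"
    using xB xX by (auto simp: BB_def B4_def tauF_def s_def)
  have x6: "\<forall>e\<in>gEU E U. x \<notin> f (\<phi> ` e)" using xB by (auto simp: BB_def B5_def)
  have x7: "\<forall>u\<in>U. f {x, \<phi> u} \<notin> (\<lambda>e. \<phi> ` e) ` gEU E U"
  proof (intro ballI notI)
    fix u assume uU: "u \<in> U" and fin: "f {x, \<phi> u} \<in> (\<lambda>e. \<phi> ` e) ` gEU E U"
    have "{x, \<phi> u} \<in> KN_edges N" using x1 img uU x2 by (intro KN_in) auto
    then have "{x, \<phi> u} \<in> Q" using fin by (simp add: Q_def)
    then have "x \<in> B6" by (auto simp: B6_def)
    then show False using xB by (simp add: BB_def)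
  qed
  have x8: "\<forall>u\<in>gnb E w \<inter> U. \<forall>u'\<in>gnb E w \<inter> U. u \<noteq> u' \<longrightarrow> f {x, \<phi> u} \<noteq> {x, \<phi> u'}"
  proof (intro ballI impI notI)
    fix u u' assume u: "u \<in> gnb E w \<inter> U" and u': "u' \<in> gnb E w \<inter> U" and neq: "u \<noteq> u'"
      and eq: "f {x, \<phi> u} = {x, \<phi> u'}"
    have "x \<noteq> \<phi> u" using x2 u by auto
    then have "x \<in> gT N f (\<phi> u) (\<phi> u')" using x1 eq by (simp add: gT_def)
    then have "x \<in> B7" using u u' neq by (auto simp: B7_def B_def)
    then show False using xB by (simp add: BB_def)
  qed
  have "Inv N f V E (insert w U) (\<phi>(w:=x))"
    by (rule extend[OF fN G inv wV wmax x1 x2 x3 x4 x5 x6 x7 x8])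
  then show ?thesis using wV by blast
qed

lemma build: "k \<le> card V \<Longrightarrow> \<exists>U \<phi>. card U = k \<and> Inv N f V E U \<phi>"
proof (induction k)
  case 0
  have "{} \<notin> E" using edge[OF G, of "{}"] by auto
  then have "gEU E {} = {}" by (auto simp: gEU_def)
  then have "Inv N f V E {} id" by (simp add: Inv_def gS_def)
  then show ?case by (intro exI[of _ "{}"]) auto
next
  case (Suc k)
  then obtain U \<phi> where U: "card U = k" "Inv N f V E U \<phi>" by auto
  have UsV: "U \<subseteq> V" using U(2) by (simp add: Inv_def)
  have "U \<noteq> V" using U(1) Suc.prems by auto
  then obtain w \<psi> where w: "w \<in> V - U" "Inv N f V E (insert w U) \<psi>" using step[OF U(2)] by blast
  have "finite U" using UsV finV[OF G] by (rule finite_subset)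
  then have "card (insert w U) = Suc k" using w(1) U(1) by simp
  then show ?case using w(2) by blast
qed

lemma good_map: "\<exists>\<phi>. inj_on \<phi> V \<and> \<phi> ` V \<subseteq> {..<N} \<and> (\<forall>e\<in>(image \<phi>) ` E. f e \<notin> (image \<phi>) ` E)"
proof -
  obtain U \<phi> where U: "card U = card V" "Inv N f V E U \<phi>" using build by blast
  have UsV: "U \<subseteq> V" using U(2) by (simp add: Inv_def)
  have "U = V" using card_subset_eq[OF finV[OF G] UsV U(1)] .
  then have I: "Inv N f V E V \<phi>" using U(2) by simp
  have EV: "gEU E V = E" using edge[OF G] by (auto simp: gEU_def)
  show ?thesis using I EV unfolding Inv_def by auto
qed

end

theorem theorem3p6:
  shows "\<exists>C::real. \<forall>V E. is_graph V E \<and> no_isolated V E \<longrightarrow>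
           (\<exists>N. g1_good V E N) \<and> real (g1 V E) \<le> C * real (card E)"
proof (intro exI[of _ 600] allI impI)
  fix V E assume H: "is_graph V E \<and> no_isolated V E"
  have good: "g1_good V E (600 * card E)"
    unfolding g1_good_def using good_map H by blast
  then have "g1 V E \<le> 600 * card E" unfolding g1_def by (rule Least_le)
  then have "real (g1 V E) \<le> real (600 * card E)" by (rule of_nat_mono)
  then show "(\<exists>N. g1_good V E N) \<and> real (g1 V E) \<le> 600 * real (card E)"
    using good by auto
qed

end
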